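(* Let $N=(G=(V,E),\sigma,u,s)$ be a skew-symmetric network and $f$ an IS-flow in $N$. Then $f$ has maximum value among IS-flows in $N$ if and only if the split-graph $S(G^+,u_f)$ contains no regular path from $s$ to $s'$.
   Context: A skew-symmetric graph is a finite directed graph $G=(V,E)$ (parallel arcs allowed) with a map $\sigma$ of $V\cup E$ onto itself such that $\sigma(x)\ne x$, $\sigma(\sigma(x))=x$ for all $x$, $\sigma(V)=V$, and for each arc $a$ from $v$ to $w$, $\sigma(a)$ is an arc from $\sigma(w)$ to $\sigma(v)$. A function $h$ on $E$ is symmetric if $h(a)=h(\sigma(a))$. A skew-symmetric network is $N=(G,\sigma,u,s)$ with $u:E\to\mathbb Z_{\ge0}$ symmetric and source $s$; $s'=\sigma(s)$ is the sink. A flow is $f:E\to\mathbb R_{\ge0}$ with $f\le u$ and flow conservation at every node other than $s,s'$; value $|f|$ is the net outflow at $s$. An IS-flow is an integer-valued symmetric flow. $G^+=(V,E^+)$ is obtained from $G$ by adding for each arc $a=(x,y)$ a reverse arc $a^R=(y,x)$, with $\sigma(a^R)=(\sigma(a))^R$; residual capacities: $u_f(a)=u(a)-f(a)$ for $a\in E$, $u_f(a^R)=f(a)$. For a skew-symmetric graph $H$ with nonnegative integer symmetric capacity $h$, the split-graph $S(H,h)$ is obtained by replacing each arc $a=(x,y)$ by two parallel arcs $a_1,a_2$ from $x$ to $y$ with capacities $\lceil h(a)/2\rceil$ and $\lfloor h(a)/2\rfloor$ respectively and deleting arcs of zero capacity; its symmetry is $\sigma(a_i)=(\sigma(a))_i$.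 A regular path is a directed path containing no pair of mutually symmetric arcs ($a$ and $\sigma(a)$). *)

theory Defs
  imports Complex_Main
begin

text \<open>A directed multigraph is given by a vertex set V, an arc set E and
  tail/head maps on arcs (parallel arcs allowed). The skew symmetry sigma is
  given by its two components sv (on vertices) and se (on arcs).\<close>

definition skew_sym_graph ::
  "'v set \<Rightarrow> 'e set \<Rightarrow> ('e \<Rightarrow> 'v) \<Rightarrow> ('e \<Rightarrow> 'v) \<Rightarrow> ('v \<Rightarrow> 'v) \<Rightarrow> ('e \<Rightarrow> 'e) \<Rightarrow> bool" where
  "skew_sym_graph V E tail head sv se \<longleftrightarrow>
     finite V \<and> finite E \<and>
     (\<forall>e\<in>E. tail e \<in> V \<and> head e \<in> V) \<and>
     (\<forall>v\<in>V. sv v \<in> V \<and> sv v \<noteq> v \<and> sv (sv v) = v) \<and>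
     (\<forall>e\<in>E. se e \<in> E \<and> se e \<noteq> e \<and> se (se e) = e \<and>
              tail (se e) = sv (head e) \<and> head (se e) = sv (tail e))"

definition skew_sym_network ::
  "'v set \<Rightarrow> 'e set \<Rightarrow> ('e \<Rightarrow> 'v) \<Rightarrow> ('e \<Rightarrow> 'v) \<Rightarrow> ('v \<Rightarrow> 'v) \<Rightarrow> ('e \<Rightarrow> 'e)
     \<Rightarrow> ('e \<Rightarrow> nat) \<Rightarrow> 'v \<Rightarrow> bool" where
  "skew_sym_network V E tail head sv se u s \<longleftrightarrow>
     skew_sym_graph V E tail head sv se \<and> s \<in> V \<and> (\<forall>e\<in>E. u (se e) = u e)"

definition is_flow ::
  "'v set \<Rightarrow> 'e set \<Rightarrow> ('e \<Rightarrow> 'v) \<Rightarrow> ('e \<Rightarrow> 'v) \<Rightarrow> ('e \<Rightarrow> nat) \<Rightarrow> 'v \<Rightarrow> 'v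
     \<Rightarrow> ('e \<Rightarrow> real) \<Rightarrow> bool" where
  "is_flow V E tail head u s t f \<longleftrightarrow>
     (\<forall>e\<in>E. 0 \<le> f e \<and> f e \<le> real (u e)) \<and>
     (\<forall>v\<in>V - {s, t}. (\<Sum>e\<in>{e\<in>E. head e = v}. f e) = (\<Sum>e\<in>{e\<in>E. tail e = v}. f e))"

definition flow_value ::
  "'e set \<Rightarrow> ('e \<Rightarrow> 'v) \<Rightarrow> ('e \<Rightarrow> 'v) \<Rightarrow> 'v \<Rightarrow> ('e \<Rightarrow> real) \<Rightarrow> real" where
  "flow_value E tail head s f = (\<Sum>e\<in>{e\<in>E. tail e = s}. f e) - (\<Sum>e\<in>{e\<in>E. head e = s}. f e)"

definition is_IS_flow ::
  "'v set \<Rightarrow> 'e set \<Rightarrow> ('e \<Rightarrow> 'v) \<Rightarrow> ('e \<Rightarrow> 'v) \<Rightarrow> ('v \<Rightarrow> 'v) \<Rightarrow> ('e \<Rightarrow> 'e)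
     \<Rightarrow> ('e \<Rightarrow> nat) \<Rightarrow> 'v \<Rightarrow> ('e \<Rightarrow> real) \<Rightarrow> bool" where
  "is_IS_flow V E tail head sv se u s f \<longleftrightarrow>
     is_flow V E tail head u s (sv s) f \<and>
     (\<forall>e\<in>E. f e \<in> \<int>) \<and> (\<forall>e\<in>E. f (se e) = f e)"

text \<open>The graph G+: arcs are pairs (a, True) (= a) and (a, False) (= the reverse arc a^R).\<close>
definition plus_arcs :: "'e set \<Rightarrow> ('e \<times> bool) set" where
  "plus_arcs E = E \<times> UNIV"

definition plus_tl :: "('e \<Rightarrow> 'v) \<Rightarrow> ('e \<Rightarrow> 'v) \<Rightarrow> 'e \<times> bool \<Rightarrow> 'v" where
  "plus_tl tail head a = (if snd a then tail (fst a) else head (fst a))"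

definition plus_hd :: "('e \<Rightarrow> 'v) \<Rightarrow> ('e \<Rightarrow> 'v) \<Rightarrow> 'e \<times> bool \<Rightarrow> 'v" where
  "plus_hd tail head a = (if snd a then head (fst a) else tail (fst a))"

text \<open>sigma(a^R) = (sigma a)^R\<close>
definition plus_se :: "('e \<Rightarrow> 'e) \<Rightarrow> 'e \<times> bool \<Rightarrow> 'e \<times> bool" where
  "plus_se se a = (se (fst a), snd a)"

definition resid :: "('e \<Rightarrow> nat) \<Rightarrow> ('e \<Rightarrow> real) \<Rightarrow> 'e \<times> bool \<Rightarrow> real" where
  "resid u f a = (if snd a then real (u (fst a)) - f (fst a) else f (fst a))"

text \<open>Split graph S(H,h): arc a becomes (a,True) = a_1 with capacity ceil(h a/2)
  and (a,False) = a_2 with capacity floor(h a/2); zero-capacity arcs deleted.\<close>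
definition split_cap :: "('x \<Rightarrow> real) \<Rightarrow> 'x \<times> bool \<Rightarrow> int" where
  "split_cap h b = (if snd b then \<lceil>h (fst b) / 2\<rceil> else \<lfloor>h (fst b) / 2\<rfloor>)"

definition split_arcs :: "'x set \<Rightarrow> ('x \<Rightarrow> real) \<Rightarrow> ('x \<times> bool) set" where
  "split_arcs A h = {b. fst b \<in> A \<and> 0 < split_cap h b}"

definition split_tl :: "('x \<Rightarrow> 'v) \<Rightarrow> 'x \<times> bool \<Rightarrow> 'v" where
  "split_tl tail b = tail (fst b)"

definition split_hd :: "('x \<Rightarrow> 'v) \<Rightarrow> 'x \<times> bool \<Rightarrow> 'v" where
  "split_hd head b = head (fst b)"

definition split_se :: "('x \<Rightarrow> 'x) \<Rightarrow> 'x \<times> bool \<Rightarrow> 'x \<times> bool" where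
  "split_se se b = (se (fst b), snd b)"

definition is_path :: "'x set \<Rightarrow> ('x \<Rightarrow> 'v) \<Rightarrow> ('x \<Rightarrow> 'v) \<Rightarrow> 'x list \<Rightarrow> 'v \<Rightarrow> 'v \<Rightarrow> bool" where
  "is_path A tail head p x y \<longleftrightarrow>
     p \<noteq> [] \<and> set p \<subseteq> A \<and> tail (p ! 0) = x \<and> head (last p) = y \<and>
     (\<forall>i. Suc i < length p \<longrightarrow> head (p ! i) = tail (p ! Suc i))"

definition is_regular_path ::
  "'x set \<Rightarrow> ('x \<Rightarrow> 'v) \<Rightarrow> ('x \<Rightarrow> 'v) \<Rightarrow> ('x \<Rightarrow> 'x) \<Rightarrow> 'x list \<Rightarrow> 'v \<Rightarrow> 'v \<Rightarrow> bool" where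
  "is_regular_path A tail head se p x y \<longleftrightarrow>
     is_path A tail head p x y \<and> (\<forall>a\<in>set p. se a \<notin> set p)"

end

theory Submission
  imports Defs
begin


fun wk :: "('x \<Rightarrow> 'v) \<Rightarrow> ('x \<Rightarrow> 'v) \<Rightarrow> 'v \<Rightarrow> 'x list \<Rightarrow> 'v \<Rightarrow> bool" where
  "wk t h x [] y = (x = y)"
| "wk t h x (a # p) y = (t a = x \<and> wk t h (h a) p y)"

lemma wk_append: "wk t h x (p @ q) y \<longleftrightarrow> (\<exists>m. wk t h x p m \<and> wk t h m q y)"
  by (induction p arbitrary: x) auto

lemma wk_char:
  "wk t h x p y \<longleftrightarrow> (if p = [] then x = y else t (p!0) = x \<and> h (last p) = y \<and>
      (\<forall>i. Suc i < length p \<longrightarrow> h (p ! i) = t (p ! Suc i)))"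
proof (induction p arbitrary: x)
  case Nil
  then show ?case by simp
next
  case (Cons a p)
  show ?case
  proof (cases "p = []")
    case True
    then show ?thesis by auto
  next
    case False
    have "(\<forall>i. Suc i < length (a # p) \<longrightarrow> h ((a # p) ! i) = t ((a # p) ! Suc i))
      \<longleftrightarrow> h a = t (p ! 0) \<and> (\<forall>i. Suc i < length p \<longrightarrow> h (p ! i) = t (p ! Suc i))"
      (is "?L \<longleftrightarrow> ?R")
    proof
      assume L: ?L
      have "h a = t (p ! 0)" using L[rule_format, of 0] False by simp
      moreover have "\<forall>i. Suc i < length p \<longrightarrow> h (p ! i) = t (p ! Suc i)"
        using L by (metis Suc_less_eq length_Cons nth_Cons_Suc)
      ultimately show ?R by blast
    next
      assume R: ?R
      show ?L
      proof (intro allI impI)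
        fix i assume "Suc i < length (a # p)"
        then show "h ((a # p) ! i) = t ((a # p) ! Suc i)"
          using R by (cases i) auto
      qed
    qed
    then show ?thesis using Cons False by auto
  qed
qed

lemma is_path_wk: "is_path A t h p x y \<longleftrightarrow> p \<noteq> [] \<and> set p \<subseteq> A \<and> wk t h x p y"
  unfolding is_path_def using wk_char[of t h x p y] by auto

lemma wk_map_fst: "wk (split_tl t) (split_hd h) x P y \<longleftrightarrow> wk t h x (map fst P) y"
  by (induction P arbitrary: x) (auto simp: split_tl_def split_hd_def)

lemma wk_cut:
  assumes "wk t h x W y"
  shows "\<exists>W'. wk t h x W' y \<and> set W' \<subseteq> set W \<and> distinct W'"
  using assms
proof (induction "length W" arbitrary: W rule: less_induct)
  case less
  show ?case
  proof (cases "distinct W")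
    case True
    then show ?thesis using less.prems by blast
  next
    case False
    then obtain i j where ij: "i < j" "j < length W" "W ! i = W ! j"
      by (metis distinct_conv_nth linorder_neqE_nat)
    obtain m1 where m1: "wk t h x (take i W) m1" "wk t h m1 (drop i W) y"
      using less.prems wk_append[of t h x "take i W" "drop i W" y] by auto
    obtain m2 where m2: "wk t h x (take j W) m2" "wk t h m2 (drop j W) y"
      using less.prems wk_append[of t h x "take j W" "drop j W" y] by auto
    have "drop i W = W ! i # drop (Suc i) W" using ij by (metis Cons_nth_drop_Suc order.strict_trans)
    then have "t (W ! i) = m1" using m1 by simp
    moreover have "drop j W = W ! j # drop (Suc j) W" using ij by (simp add: Cons_nth_drop_Suc)
    then have "t (W ! j) = m2" using m2 by simp
    ultimately have "m1 = m2" using ij by simp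
    then have w: "wk t h x (take i W @ drop j W) y" using m1 m2 by (simp add: wk_append) blast
    have l: "length (take i W @ drop j W) < length W" using ij by simp
    have s: "set (take i W @ drop j W) \<subseteq> set W"
      using set_drop_subset[of j W] set_take_subset[of i W] by auto
    show ?thesis using less.hyps[OF l w] s by blast
  qed
qed




locale ssg =
  fixes V :: "'v set" and A :: "'a set" and tl hd :: "'a \<Rightarrow> 'v"
    and sv :: "'v \<Rightarrow> 'v" and sa :: "'a \<Rightarrow> 'a"
  assumes finA: "finite A"
    and ends: "a \<in> A \<Longrightarrow> tl a \<in> V \<and> hd a \<in> V"
    and svV: "v \<in> V \<Longrightarrow> sv v \<in> V \<and> sv v \<noteq> v \<and> sv (sv v) = v"
    and saA: "a \<in> A \<Longrightarrow> sa a \<in> A \<and> sa a \<noteq> a \<and> sa (sa a) = a \<and>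
                 tl (sa a) = sv (hd a) \<and> hd (sa a) = sv (tl a)"
begin

lemma reidx_tl:
  assumes "w \<in> V"
  shows "(\<Sum>b\<in>{b\<in>A. tl b = w}. F (sa b)) = (\<Sum>c\<in>{c\<in>A. hd c = sv w}. F c)"
proof (rule sum.reindex_bij_witness[of _ sa sa])
  fix c assume "c \<in> {c\<in>A. hd c = sv w}"
  then show "sa (sa c) = c" using saA[of c] by auto
  from \<open>c \<in> _\<close> show "sa c \<in> {b\<in>A. tl b = w}"
    using saA[of c] svV[OF assms] by auto
next
  fix b assume "b \<in> {b\<in>A. tl b = w}"
  then show "sa (sa b) = b" "sa b \<in> {c\<in>A. hd c = sv w}" using saA[of b] by auto
qed auto

lemma reidx_hd:
  assumes "w \<in> V"
  shows "(\<Sum>b\<in>{b\<in>A. hd b = w}. F (sa b)) = (\<Sum>c\<in>{c\<in>A. tl c = sv w}. F c)"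
proof (rule sum.reindex_bij_witness[of _ sa sa])
  fix c assume "c \<in> {c\<in>A. tl c = sv w}"
  then show "sa (sa c) = c" using saA[of c] by auto
  from \<open>c \<in> _\<close> show "sa c \<in> {b\<in>A. hd b = w}"
    using saA[of c] svV[OF assms] by auto
next
  fix b assume "b \<in> {b\<in>A. hd b = w}"
  then show "sa (sa b) = b" "sa b \<in> {c\<in>A. tl c = sv w}" using saA[of b] by auto
qed auto

lemma sum_ind: "a \<in> A \<Longrightarrow> (\<Sum>b\<in>{b\<in>A. P b}. (if a = b then 1 else 0::int)) = (if P a then 1 else 0)"
  using finA by (simp add: sum.delta)

lemma walk_count:
  assumes "wk tl hd x W y" "set W \<subseteq> A"
  shows "(\<Sum>a\<in>{a\<in>A. tl a = w}. int (count_list W a)) - (\<Sum>a\<in>{a\<in>A. hd a = w}. int (count_list W a))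
        = (if w = x then 1 else 0) - (if w = y then 1 else 0)"
  using assms
proof (induction W arbitrary: x)
  case Nil
  then show ?case by simp
next
  case (Cons a W)
  have a: "a \<in> A" using Cons by simp
  have e: "\<And>P. (\<Sum>b\<in>{b\<in>A. P b}. int (count_list (a # W) b))
     = (\<Sum>b\<in>{b\<in>A. P b}. (if a = b then 1 else 0)) + (\<Sum>b\<in>{b\<in>A. P b}. int (count_list W b))"
    by (auto simp add: sum.distrib[symmetric] intro!: sum.cong)
  show ?case using Cons.IH[of "hd a"] Cons.prems unfolding e sum_ind[OF a] by auto
qed

lemma wk_end_V: "wk tl hd x W y \<Longrightarrow> x \<in> V \<Longrightarrow> set W \<subseteq> A \<Longrightarrow> y \<in> V"
  by (induction W arbitrary: x) (auto dest: ends)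

lemma length_le:
  assumes "set W \<subseteq> A" "\<forall>a\<in>A. int (count_list W a) \<le> phi a"
  shows "length W \<le> nat (\<Sum>a\<in>A. phi a)"
proof -
  have "int (length W) = (\<Sum>a\<in>A. int (count_list W a))"
    using sum_count_set[OF assms(1) finA] by (metis of_nat_sum)
  also have "\<dots> \<le> (\<Sum>a\<in>A. phi a)" using assms(2) by (intro sum_mono) auto
  finally show ?thesis by linarith
qed

lemma exists_walk:
  fixes phi :: "'a \<Rightarrow> int" and s :: 'v
  assumes sV: "s \<in> V"
    and nonneg: "\<And>a. a \<in> A \<Longrightarrow> 0 \<le> phi a"
    and sym: "\<And>a. a \<in> A \<Longrightarrow> phi (sa a) = phi a"
    and cons: "\<And>v. v \<in> V - {s, sv s} \<Longrightarrow>
       (\<Sum>a\<in>{a\<in>A. hd a = v}. phi a) = (\<Sum>a\<in>{a\<in>A. tl a = v}. phi a)"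
    and val: "(\<Sum>a\<in>{a\<in>A. tl a = s}. phi a) > (\<Sum>a\<in>{a\<in>A. hd a = s}. phi a)"
  shows "\<exists>W. wk tl hd s W (sv s) \<and> set W \<subseteq> A \<and>
           (\<forall>a\<in>A. int (count_list W a) + int (count_list W (sa a)) \<le> phi a)"
proof -
  define P where "P = (\<lambda>(W, z). wk tl hd s W z \<and> set W \<subseteq> A \<and>
           (\<forall>a\<in>A. int (count_list W a) + int (count_list W (sa a)) \<le> phi a))"
  have P0: "P ([], s)" unfolding P_def using nonneg by auto
  have bnd: "\<forall>y. P y \<longrightarrow> length (fst y) < Suc (nat (\<Sum>a\<in>A. phi a))"
  proof (intro allI impI)
    fix y assume "P y"
    then obtain W z where y: "y = (W, z)" "set W \<subseteq> A"
        "\<forall>a\<in>A. int (count_list W a) + int (count_list W (sa a)) \<le> phi a"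
      unfolding P_def by auto
    then have "\<forall>a\<in>A. int (count_list W a) \<le> phi a" by force
    then show "length (fst y) < Suc (nat (\<Sum>a\<in>A. phi a))" using length_le[OF y(2), of phi] y(1) by auto
  qed
  obtain Wz where mx: "P Wz" "\<forall>y. P y \<longrightarrow> length (fst y) \<le> length (fst Wz)"
    using ex_has_greatest_nat[OF P0 bnd] by blast
  obtain W z where Wz: "Wz = (W, z)" by fastforce
  have w: "wk tl hd s W z" and WA: "set W \<subseteq> A"
    and bud: "\<forall>a\<in>A. int (count_list W a) + int (count_list W (sa a)) \<le> phi a"
    using mx(1) unfolding Wz P_def by auto
  show ?thesis
  proof (cases "z = sv s")
    case True
    then show ?thesis using w WA bud by blast
  next
    case zne: False
    have zV: "z \<in> V" using wk_end_V[OF w sV WA] .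
    let ?c = "\<lambda>a. int (count_list W a)"
    have ext: "\<exists>b\<in>A. tl b = z \<and> ?c b + ?c (sa b) + 1 \<le> phi b"
    proof (rule ccontr)
      assume "\<not> ?thesis"
      then have le: "\<forall>b\<in>{b\<in>A. tl b = z}. phi b \<le> ?c b + ?c (sa b)" by force
      have "(\<Sum>b\<in>{b\<in>A. tl b = z}. phi b) \<le> (\<Sum>b\<in>{b\<in>A. tl b = z}. ?c b + ?c (sa b))"
        using le by (intro sum_mono) auto
      also have "\<dots> = (\<Sum>b\<in>{b\<in>A. tl b = z}. ?c b) + (\<Sum>b\<in>{b\<in>A. hd b = sv z}. ?c b)"
        using reidx_tl[OF zV, of ?c] by (simp add: sum.distrib)
      finally have o: "(\<Sum>b\<in>{b\<in>A. tl b = z}. phi b) \<le>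
          (\<Sum>b\<in>{b\<in>A. tl b = z}. ?c b) + (\<Sum>b\<in>{b\<in>A. hd b = sv z}. ?c b)" .
      have "(\<Sum>b\<in>{b\<in>A. hd b = z}. ?c b) + (\<Sum>b\<in>{b\<in>A. tl b = sv z}. ?c b)
           = (\<Sum>b\<in>{b\<in>A. hd b = z}. ?c b + ?c (sa b))"
        using reidx_hd[OF zV, of ?c] by (simp add: sum.distrib)
      also have "\<dots> \<le> (\<Sum>b\<in>{b\<in>A. hd b = z}. phi b)"
        using bud by (intro sum_mono) auto
      finally have i: "(\<Sum>b\<in>{b\<in>A. hd b = z}. ?c b) + (\<Sum>b\<in>{b\<in>A. tl b = sv z}. ?c b)
           \<le> (\<Sum>b\<in>{b\<in>A. hd b = z}. phi b)" .
      have dz: "(\<Sum>b\<in>{b\<in>A. tl b = z}. ?c b) - (\<Sum>b\<in>{b\<in>A. hd b = z}. ?c b)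
          = (if z = s then 1 else 0) - 1"
        using walk_count[OF w WA, of z] by simp
      have "sv z \<noteq> s" using zne svV[OF zV] svV[OF sV] by metis
      moreover have "sv z \<noteq> z" using svV[OF zV] by blast
      ultimately have dsz: "(\<Sum>b\<in>{b\<in>A. tl b = sv z}. ?c b) - (\<Sum>b\<in>{b\<in>A. hd b = sv z}. ?c b) = 0"
        using walk_count[OF w WA, of "sv z"] by simp
      show False
      proof (cases "z = s")
        case True
        then show ?thesis using o i dz dsz val by (simp only: True if_True)
      next
        case False
        then have "z \<in> V - {s, sv s}" using zV zne by auto
        from cons[OF this] show ?thesis using o i dz dsz False by (simp only: False if_False)
      qed
    qed
    then obtain b where b: "b \<in> A" "tl b = z" "?c b + ?c (sa b) + 1 \<le> phi b" by blast
    have w2: "wk tl hd s (W @ [b]) (hd b)" using w b by (simp add: wk_append)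
    have A2: "set (W @ [b]) \<subseteq> A" using b WA by auto
    have B2: "\<forall>a\<in>A. int (count_list (W @ [b]) a) + int (count_list (W @ [b]) (sa a)) \<le> phi a"
    proof
      fix a assume a: "a \<in> A"
      show "int (count_list (W @ [b]) a) + int (count_list (W @ [b]) (sa a)) \<le> phi a"
      proof (cases "a = b \<or> sa a = b")
        case True
        then show ?thesis
        proof
          assume "a = b" then show ?thesis using b saA[OF a] by auto
        next
          assume ab: "sa a = b"
          then have "a = sa b" using saA[OF a] by auto
          then show ?thesis using b saA[OF a] ab sym[OF a] by auto
        qed
      next
        case False
        then show ?thesis using bud a by auto
      qed
    qed
    have "P (W @ [b], hd b)" unfolding P_def using w2 A2 B2 by simp
    then have "length (W @ [b]) \<le> length W" using mx(2) Wz by fastforce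
    then show ?thesis by simp
  qed
qed

end



lemma net_ssg:
  assumes "skew_sym_network V E tail head sv se u s"
  shows "ssg V E tail head sv se"
  using assms unfolding skew_sym_network_def skew_sym_graph_def ssg_def by blast

lemma net_ssg_plus:
  assumes "skew_sym_network V E tail head sv se u s"
  shows "ssg V (plus_arcs E) (plus_tl tail head) (plus_hd tail head) sv (plus_se se)"
proof -
  have g: "skew_sym_graph V E tail head sv se" using assms unfolding skew_sym_network_def by blast
  note gd = g[unfolded skew_sym_graph_def]
  have 1: "finite (plus_arcs E)" using gd unfolding plus_arcs_def by simp
  have 2: "\<And>a. a \<in> plus_arcs E \<Longrightarrow> plus_tl tail head a \<in> V \<and> plus_hd tail head a \<in> V"
  proof -
    fix a assume "a \<in> plus_arcs E"
    then obtain e b where a: "a = (e, b)" "e \<in> E" unfolding plus_arcs_def by auto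
    show "plus_tl tail head a \<in> V \<and> plus_hd tail head a \<in> V"
      using gd a unfolding plus_tl_def plus_hd_def by auto
  qed
  have 3: "\<And>a. a \<in> plus_arcs E \<Longrightarrow> plus_se se a \<in> plus_arcs E \<and> plus_se se a \<noteq> a \<and> plus_se se (plus_se se a) = a \<and>
        plus_tl tail head (plus_se se a) = sv (plus_hd tail head a) \<and>
        plus_hd tail head (plus_se se a) = sv (plus_tl tail head a)"
  proof -
    fix a assume "a \<in> plus_arcs E"
    then obtain e b where a: "a = (e, b)" "e \<in> E" unfolding plus_arcs_def by auto
    have "se e \<in> E" "se e \<noteq> e" "se (se e) = e" "tail (se e) = sv (head e)" "head (se e) = sv (tail e)"
      using gd a(2) by auto
    then show "plus_se se a \<in> plus_arcs E \<and> plus_se se a \<noteq> a \<and> plus_se se (plus_se se a) = a \<and>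
        plus_tl tail head (plus_se se a) = sv (plus_hd tail head a) \<and>
        plus_hd tail head (plus_se se a) = sv (plus_tl tail head a)"
      unfolding a plus_se_def plus_arcs_def plus_tl_def plus_hd_def by simp
  qed
  have 4: "\<And>v. v \<in> V \<Longrightarrow> sv v \<in> V \<and> sv v \<noteq> v \<and> sv (sv v) = v" using gd by blast
  show ?thesis unfolding ssg_def using 1 2 3 4 by blast
qed

lemma split_sum:
  fixes H :: "'e \<times> bool \<Rightarrow> 'b::comm_monoid_add"
  assumes "finite E"
  shows "(\<Sum>x\<in>{x\<in>plus_arcs E. P x}. H x) =
     (\<Sum>e\<in>{e\<in>E. P (e, True)}. H (e, True)) + (\<Sum>e\<in>{e\<in>E. P (e, False)}. H (e, False))"
proof -
  have eq: "{x\<in>plus_arcs E. P x} = (\<lambda>e. (e, True)) ` {e\<in>E. P (e, True)} \<union> (\<lambda>e. (e, False)) ` {e\<in>E. P (e, False)}"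
    unfolding plus_arcs_def
  proof (intro equalityI subsetI)
    fix x assume "x \<in> {x \<in> E \<times> UNIV. P x}"
    then obtain e b where "x = (e, b)" "e \<in> E" "P (e, b)" by auto
    then show "x \<in> (\<lambda>e. (e, True)) ` {e\<in>E. P (e, True)} \<union> (\<lambda>e. (e, False)) ` {e\<in>E. P (e, False)}"
      by (cases b) auto
  qed auto
  have "(\<Sum>x\<in>{x\<in>plus_arcs E. P x}. H x) = (\<Sum>x\<in>(\<lambda>e. (e, True)) ` {e\<in>E. P (e, True)}. H x)
      + (\<Sum>x\<in>(\<lambda>e. (e, False)) ` {e\<in>E. P (e, False)}. H x)"
    unfolding eq using assms by (intro sum.union_disjoint) auto
  also have "\<dots> = (\<Sum>e\<in>{e\<in>E. P (e, True)}. H (e, True)) + (\<Sum>e\<in>{e\<in>E. P (e, False)}. H (e, False))"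
    by (subst sum.reindex, simp add: inj_on_def, subst sum.reindex, simp add: inj_on_def, simp)
  finally show ?thesis .
qed




lemma Ints_floor: "x \<in> \<int> \<Longrightarrow> real_of_int \<lfloor>x\<rfloor> = x"
  by (metis Ints_cases floor_of_int)

lemma hard:
  assumes net: "skew_sym_network V E tail head sv se u s"
    and f: "is_IS_flow V E tail head sv se u s f"
    and g: "is_IS_flow V E tail head sv se u s g"
    and gt: "flow_value E tail head s g > flow_value E tail head s f"
  shows "\<exists>p. is_regular_path
                  (split_arcs (plus_arcs E) (resid u f))
                  (split_tl (plus_tl tail head)) (split_hd (plus_hd tail head))
                  (split_se (plus_se se)) p s (sv s)"
proof -
  interpret G: ssg V E tail head sv se using net_ssg[OF net] .
  interpret K: ssg V "plus_arcs E" "plus_tl tail head" "plus_hd tail head" sv "plus_se se"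
    using net_ssg_plus[OF net] .
  have sV: "s \<in> V" using net unfolding skew_sym_network_def by blast
  have finE: "finite E" using G.finA .
  have fl: "is_flow V E tail head u s (sv s) f" "\<forall>e\<in>E. f e \<in> \<int>" "\<forall>e\<in>E. f (se e) = f e"
    using f unfolding is_IS_flow_def by auto
  have gl: "is_flow V E tail head u s (sv s) g" "\<forall>e\<in>E. g e \<in> \<int>" "\<forall>e\<in>E. g (se e) = g e"
    using g unfolding is_IS_flow_def by auto
  define F where "F = (\<lambda>e. \<lfloor>f e\<rfloor>)"
  define Gi where "Gi = (\<lambda>e. \<lfloor>g e\<rfloor>)"
  have fF: "\<And>e. e \<in> E \<Longrightarrow> f e = of_int (F e)" unfolding F_def using fl(2) Ints_floor by metis
  have gG: "\<And>e. e \<in> E \<Longrightarrow> g e = of_int (Gi e)" unfolding Gi_def using gl(2) Ints_floor by metis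
  define phi where "phi = (\<lambda>x. if snd x then max (Gi (fst x) - F (fst x)) 0 else max (F (fst x) - Gi (fst x)) 0)"
  have phiTF: "\<And>e. phi (e, True) - phi (e, False) = Gi e - F e" unfolding phi_def by simp
  define D where "D = (\<lambda>v. (\<Sum>e\<in>{e\<in>E. tail e = v}. Gi e - F e) - (\<Sum>e\<in>{e\<in>E. head e = v}. Gi e - F e))"
  have KD: "(\<Sum>x\<in>{x\<in>plus_arcs E. plus_tl tail head x = v}. phi x)
      - (\<Sum>x\<in>{x\<in>plus_arcs E. plus_hd tail head x = v}. phi x) = D v" for v
  proof -
    have "(\<Sum>x\<in>{x\<in>plus_arcs E. plus_tl tail head x = v}. phi x)
      - (\<Sum>x\<in>{x\<in>plus_arcs E. plus_hd tail head x = v}. phi x)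
      = ((\<Sum>e\<in>{e\<in>E. tail e = v}. phi (e, True)) + (\<Sum>e\<in>{e\<in>E. head e = v}. phi (e, False)))
      - ((\<Sum>e\<in>{e\<in>E. head e = v}. phi (e, True)) + (\<Sum>e\<in>{e\<in>E. tail e = v}. phi (e, False)))"
      unfolding split_sum[OF finE, where P="\<lambda>x. plus_tl tail head x = v"]
        split_sum[OF finE, where P="\<lambda>x. plus_hd tail head x = v"]
      by (simp add: plus_tl_def plus_hd_def)
    also have "\<dots> = (\<Sum>e\<in>{e\<in>E. tail e = v}. phi (e, True) - phi (e, False))
        - (\<Sum>e\<in>{e\<in>E. head e = v}. phi (e, True) - phi (e, False))"
      by (simp add: sum_subtractf)
    also have "\<dots> = D v" unfolding D_def phiTF ..
    finally show ?thesis .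
  qed
  have realD: "real_of_int (D v) =
      ((\<Sum>e\<in>{e\<in>E. tail e = v}. g e) - (\<Sum>e\<in>{e\<in>E. head e = v}. g e))
    - ((\<Sum>e\<in>{e\<in>E. tail e = v}. f e) - (\<Sum>e\<in>{e\<in>E. head e = v}. f e))" for v
  proof -
    have "real_of_int (D v) = (\<Sum>e\<in>{e\<in>E. tail e = v}. g e - f e) - (\<Sum>e\<in>{e\<in>E. head e = v}. g e - f e)"
      unfolding D_def of_int_diff of_int_sum using fF gG by (intro arg_cong2[where f=minus] sum.cong) auto
    then show ?thesis by (simp add: sum_subtractf)
  qed
  have cons: "\<And>v. v \<in> V - {s, sv s} \<Longrightarrow>
       (\<Sum>a\<in>{a\<in>plus_arcs E. plus_hd tail head a = v}. phi a) = (\<Sum>a\<in>{a\<in>plus_arcs E. plus_tl tail head a = v}. phi a)"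
  proof -
    fix v assume v: "v \<in> V - {s, sv s}"
    have "real_of_int (D v) = 0"
      using realD[of v] fl(1) gl(1) v unfolding is_flow_def by simp
    then show "?thesis v" using KD[of v] by simp
  qed
  have val: "(\<Sum>a\<in>{a\<in>plus_arcs E. plus_tl tail head a = s}. phi a) > (\<Sum>a\<in>{a\<in>plus_arcs E. plus_hd tail head a = s}. phi a)"
  proof -
    have "real_of_int (D s) > 0"
      using realD[of s] gt unfolding flow_value_def by simp
    then show ?thesis using KD[of s] by simp
  qed
  have nonneg: "\<And>a. a \<in> plus_arcs E \<Longrightarrow> 0 \<le> phi a" unfolding phi_def by simp
  have sym: "\<And>a. a \<in> plus_arcs E \<Longrightarrow> phi (plus_se se a) = phi a"
    unfolding phi_def plus_se_def plus_arcs_def F_def Gi_def using fl(3) gl(3) by auto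
  obtain W where W: "wk (plus_tl tail head) (plus_hd tail head) s W (sv s)" "set W \<subseteq> plus_arcs E"
      "\<forall>a\<in>plus_arcs E. int (count_list W a) + int (count_list W (plus_se se a)) \<le> phi a"
    using K.exists_walk[OF sV nonneg sym cons val] by blast
  obtain W' where W': "wk (plus_tl tail head) (plus_hd tail head) s W' (sv s)" "set W' \<subseteq> set W" "distinct W'"
    using wk_cut[OF W(1)] by blast
  have ssne: "s \<noteq> sv s" using G.svV[OF sV] by metis
  have W'ne: "W' \<noteq> []" using W'(1) ssne by (cases W') auto
  have W'A: "set W' \<subseteq> plus_arcs E" using W'(2) W(2) by blast
  have phi1: "x \<in> set W' \<Longrightarrow> 1 \<le> phi x" for x
  proof -
    assume "x \<in> set W'"
    then have "x \<in> set W" "x \<in> plus_arcs E" using W'(2) W'A by auto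
    then have "count_list W x \<noteq> 0" by (simp add: count_list_0_iff)
    then show ?thesis using W(3) \<open>x \<in> plus_arcs E\<close> by force
  qed
  have phi2: "x \<in> set W' \<Longrightarrow> plus_se se x \<in> set W' \<Longrightarrow> 2 \<le> phi x" for x
  proof -
    assume "x \<in> set W'" "plus_se se x \<in> set W'"
    then have "x \<in> set W" "plus_se se x \<in> set W" "x \<in> plus_arcs E" using W'(2) W'A by auto
    then have "count_list W x \<noteq> 0" "count_list W (plus_se se x) \<noteq> 0" by (simp_all add: count_list_0_iff)
    then show ?thesis using W(3) \<open>x \<in> plus_arcs E\<close> by force
  qed
  have resid_ge: "x \<in> plus_arcs E \<Longrightarrow> real_of_int (phi x) \<le> resid u f x" for x
  proof -
    assume "x \<in> plus_arcs E"
    then obtain e b where x: "x = (e, b)" "e \<in> E" unfolding plus_arcs_def by auto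
    have "0 \<le> f e" "f e \<le> real (u e)" "0 \<le> g e" "g e \<le> real (u e)"
      using fl(1) gl(1) x(2) unfolding is_flow_def by auto
    then show ?thesis using fF[OF x(2)] gG[OF x(2)] unfolding x resid_def phi_def by (cases b) auto
  qed
  define rep where "rep = (\<lambda>x. SOME y. y \<in> {x, plus_se se x})"
  define idx where "idx = (\<lambda>x. plus_se se x \<notin> set W' \<or> rep x = x)"
  define P where "P = map (\<lambda>x. (x, idx x)) W'"
  have Pne: "P \<noteq> []" unfolding P_def using W'ne by simp
  have Pw: "wk (split_tl (plus_tl tail head)) (split_hd (plus_hd tail head)) s P (sv s)"
    unfolding wk_map_fst P_def using W'(1) by (simp add: comp_def)
  have PA: "set P \<subseteq> split_arcs (plus_arcs E) (resid u f)"
  proof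
    fix y assume "y \<in> set P"
    then obtain x where x: "x \<in> set W'" "y = (x, idx x)" unfolding P_def by auto
    have xA: "x \<in> plus_arcs E" using x W'A by auto
    have "0 < split_cap (resid u f) (x, idx x)"
    proof (cases "idx x")
      case True
      have "1 \<le> resid u f x" using phi1[OF x(1)] resid_ge[OF xA] by linarith
      then show ?thesis using True unfolding split_cap_def by simp
    next
      case False
      then have "plus_se se x \<in> set W'" unfolding idx_def by auto
      then have "2 \<le> resid u f x" using phi2[OF x(1)] resid_ge[OF xA] by linarith
      then have "1 \<le> \<lfloor>resid u f x / 2\<rfloor>" by (simp add: le_floor_iff)
      then show ?thesis using False unfolding split_cap_def by simp
    qed
    then show "y \<in> split_arcs (plus_arcs E) (resid u f)" unfolding split_arcs_def using x xA by simp
  qed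
  have reg: "\<forall>a\<in>set P. split_se (plus_se se) a \<notin> set P"
  proof (intro ballI notI)
    fix a assume a: "a \<in> set P" and sa: "split_se (plus_se se) a \<in> set P"
    then obtain x where x: "x \<in> set W'" "a = (x, idx x)" unfolding P_def by auto
    have xA: "x \<in> plus_arcs E" using x W'A by auto
    have sx: "split_se (plus_se se) a = (plus_se se x, idx x)" unfolding x split_se_def by simp
    then have sxW: "plus_se se x \<in> set W'" "idx (plus_se se x) = idx x"
      using sa unfolding P_def by auto
    have ss: "plus_se se (plus_se se x) = x" "plus_se se x \<noteq> x" using K.saA[OF xA] by auto
    have rr: "rep (plus_se se x) = rep x" unfolding rep_def using ss by (simp add: insert_commute)
    have rin: "rep x \<in> {x, plus_se se x}" unfolding rep_def by (rule someI_ex) blast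
    have "idx x = (rep x = x)" unfolding idx_def using sxW by simp
    moreover have "idx (plus_se se x) = (rep x = plus_se se x)" unfolding idx_def using ss x(1) rr by simp
    ultimately show False using sxW(2) rin ss by auto
  qed
  show ?thesis unfolding is_regular_path_def is_path_wk using Pne Pw PA reg by blast
qed




lemma count_map_fst:
  "distinct P \<Longrightarrow> count_list (map fst P) x =
     (if (x, True) \<in> set P then 1 else 0) + (if (x, False) \<in> set P then 1 else 0)"
proof (induction P)
  case Nil
  then show ?case by simp
next
  case (Cons y P)
  obtain a b where y: "y = (a, b)" by fastforce
  show ?case using Cons by (cases b) (auto simp: y)
qed

lemma cap_T: "0 < split_cap h (x, True) \<Longrightarrow> h x = real_of_int k \<Longrightarrow> 1 \<le> k"
  unfolding split_cap_def by simp

lemma cap_F: "0 < split_cap h (x, False) \<Longrightarrow> h x = real_of_int k \<Longrightarrow> 2 \<le> k"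
  unfolding split_cap_def by (simp add: floor_less_iff)

lemma easy:
  assumes net: "skew_sym_network V E tail head sv se u s"
    and f: "is_IS_flow V E tail head sv se u s f"
    and p: "is_regular_path
                  (split_arcs (plus_arcs E) (resid u f))
                  (split_tl (plus_tl tail head)) (split_hd (plus_hd tail head))
                  (split_se (plus_se se)) p s (sv s)"
  shows "\<exists>g. is_IS_flow V E tail head sv se u s g \<and>
     flow_value E tail head s g > flow_value E tail head s f"
proof -
  interpret G: ssg V E tail head sv se using net_ssg[OF net] .
  interpret K: ssg V "plus_arcs E" "plus_tl tail head" "plus_hd tail head" sv "plus_se se"
    using net_ssg_plus[OF net] .
  have sV: "s \<in> V" using net unfolding skew_sym_network_def by blast
  have finE: "finite E" using G.finA .
  have usym: "\<forall>e\<in>E. u (se e) = u e" using net unfolding skew_sym_network_def by blast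
  have fl: "is_flow V E tail head u s (sv s) f" "\<forall>e\<in>E. f e \<in> \<int>" "\<forall>e\<in>E. f (se e) = f e"
    using f unfolding is_IS_flow_def by auto
  have ssne: "s \<noteq> sv s" using G.svV[OF sV] by metis
  let ?r = "resid u f"
  have pp: "set p \<subseteq> split_arcs (plus_arcs E) ?r"
      "wk (split_tl (plus_tl tail head)) (split_hd (plus_hd tail head)) s p (sv s)"
      "\<forall>a\<in>set p. split_se (plus_se se) a \<notin> set p"
    using p unfolding is_regular_path_def is_path_wk by auto
  obtain p' where p': "wk (split_tl (plus_tl tail head)) (split_hd (plus_hd tail head)) s p' (sv s)"
      "set p' \<subseteq> set p" "distinct p'"
    using wk_cut[OF pp(2)] by blast
  define Q where "Q = map fst p'"
  have Qw: "wk (plus_tl tail head) (plus_hd tail head) s Q (sv s)" using p'(1) unfolding Q_def wk_map_fst .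
  have QA: "set Q \<subseteq> plus_arcs E" using p'(2) pp(1) unfolding Q_def split_arcs_def by auto
  define c where "c = (\<lambda>x. int (count_list Q x))"
  have cnt: "c x = (if (x, True) \<in> set p' then 1 else 0) + (if (x, False) \<in> set p' then 1 else 0)" for x
    unfolding c_def Q_def using count_map_fst[OF p'(3)] by simp
  have rint: "x \<in> plus_arcs E \<Longrightarrow> ?r x = real_of_int \<lfloor>?r x\<rfloor>" for x
    using fl(2) unfolding plus_arcs_def resid_def
    by (cases "snd x") (auto intro!: Ints_floor[symmetric])
  have rsym: "x \<in> plus_arcs E \<Longrightarrow> ?r (plus_se se x) = ?r x" for x
    using fl(3) usym unfolding plus_arcs_def resid_def plus_se_def by auto
  have mem: "(y, b) \<in> set p' \<Longrightarrow> 0 < split_cap ?r (y, b)" for y b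
    using p'(2) pp(1) unfolding split_arcs_def by auto
  have regp: "(y, b) \<in> set p' \<Longrightarrow> (plus_se se y, b) \<notin> set p'" for y b
  proof
    assume "(y, b) \<in> set p'" "(plus_se se y, b) \<in> set p'"
    then have "(y, b) \<in> set p" "(plus_se se y, b) \<in> set p" using p'(2) by auto
    then show False using pp(3) unfolding split_se_def by force
  qed
  have rnn: "x \<in> plus_arcs E \<Longrightarrow> 0 \<le> ?r x" for x
    using fl(1) unfolding plus_arcs_def resid_def is_flow_def by (cases "snd x") auto
  have budget: "x \<in> plus_arcs E \<Longrightarrow> real_of_int (c x + c (plus_se se x)) \<le> ?r x" for x
  proof -
    assume xA: "x \<in> plus_arcs E"
    define k where "k = \<lfloor>?r x\<rfloor>"
    have rk: "?r x = of_int k" "?r (plus_se se x) = of_int k" using rint[OF xA] rsym[OF xA] k_def by auto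
    have k0: "0 \<le> k" using rnn[OF xA] rk(1) by simp
    have T1: "(x, True) \<in> set p' \<Longrightarrow> 1 \<le> k" by (rule cap_T[OF mem rk(1)])
    have T2: "(plus_se se x, True) \<in> set p' \<Longrightarrow> 1 \<le> k" by (rule cap_T[OF mem rk(2)])
    have F1: "(x, False) \<in> set p' \<Longrightarrow> 2 \<le> k" by (rule cap_F[OF mem rk(1)])
    have F2: "(plus_se se x, False) \<in> set p' \<Longrightarrow> 2 \<le> k" by (rule cap_F[OF mem rk(2)])
    have R1: "\<not> ((x, True) \<in> set p' \<and> (plus_se se x, True) \<in> set p')" using regp by blast
    have R2: "\<not> ((x, False) \<in> set p' \<and> (plus_se se x, False) \<in> set p')" using regp by blast
    have "c x + c (plus_se se x) \<le> k"
      unfolding cnt using T1 T2 F1 F2 R1 R2 k0 by (auto split: if_splits)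
    then show ?thesis using rk by simp
  qed
  have cnn: "0 \<le> c x" for x unfolding c_def by simp
  define d where "d = (\<lambda>e. c (e, True) + c (se e, True) - c (e, False) - c (se e, False))"
  define g where "g = (\<lambda>e. f e + real_of_int (d e))"
  define D1 where "D1 = (\<lambda>e. c (e, True) - c (e, False))"
  define delta where "delta = (\<lambda>w. (if w = s then 1 else 0) - (if w = sv s then 1 else (0::int)))"
  have D1c: "(\<Sum>e\<in>{e\<in>E. tail e = w}. D1 e) - (\<Sum>e\<in>{e\<in>E. head e = w}. D1 e) = delta w" for w
  proof -
    have "delta w = (\<Sum>x\<in>{x\<in>plus_arcs E. plus_tl tail head x = w}. c x)
      - (\<Sum>x\<in>{x\<in>plus_arcs E. plus_hd tail head x = w}. c x)"
      using K.walk_count[OF Qw QA, of w] unfolding delta_def c_def by simp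
    also have "\<dots> = ((\<Sum>e\<in>{e\<in>E. tail e = w}. c (e, True)) + (\<Sum>e\<in>{e\<in>E. head e = w}. c (e, False)))
      - ((\<Sum>e\<in>{e\<in>E. head e = w}. c (e, True)) + (\<Sum>e\<in>{e\<in>E. tail e = w}. c (e, False)))"
      unfolding split_sum[OF finE, where P="\<lambda>x. plus_tl tail head x = w"]
        split_sum[OF finE, where P="\<lambda>x. plus_hd tail head x = w"]
      by (simp add: plus_tl_def plus_hd_def)
    also have "\<dots> = (\<Sum>e\<in>{e\<in>E. tail e = w}. D1 e) - (\<Sum>e\<in>{e\<in>E. head e = w}. D1 e)"
      unfolding D1_def by (simp add: sum_subtractf)
    finally show ?thesis by simp
  qed
  have dD: "d e = D1 e + D1 (se e)" for e unfolding d_def D1_def by simp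
  have dnet: "v \<in> V \<Longrightarrow> (\<Sum>e\<in>{e\<in>E. tail e = v}. d e) - (\<Sum>e\<in>{e\<in>E. head e = v}. d e) = 2 * delta v" for v
  proof -
    assume vV: "v \<in> V"
    have "(\<Sum>e\<in>{e\<in>E. tail e = v}. d e) - (\<Sum>e\<in>{e\<in>E. head e = v}. d e)
      = ((\<Sum>e\<in>{e\<in>E. tail e = v}. D1 e) - (\<Sum>e\<in>{e\<in>E. head e = v}. D1 e))
      + ((\<Sum>e\<in>{e\<in>E. tail e = v}. D1 (se e)) - (\<Sum>e\<in>{e\<in>E. head e = v}. D1 (se e)))"
      unfolding dD by (simp add: sum.distrib)
    also have "\<dots> = delta v + ((\<Sum>e\<in>{e\<in>E. head e = sv v}. D1 e) - (\<Sum>e\<in>{e\<in>E. tail e = sv v}. D1 e))"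
      unfolding D1c G.reidx_tl[OF vV] G.reidx_hd[OF vV] ..
    also have "\<dots> = delta v - delta (sv v)" using D1c[of "sv v"] by simp
    also have "\<dots> = 2 * delta v"
    proof -
      have e1: "(sv v = s) = (v = sv s)" using G.svV[OF vV] G.svV[OF sV] by metis
      have e2: "(sv v = sv s) = (v = s)" using G.svV[OF vV] G.svV[OF sV] by metis
      show ?thesis unfolding delta_def e1 e2 using ssne by auto
    qed
    finally show ?thesis .
  qed
  have gsum: "(\<Sum>e\<in>B. g e) = (\<Sum>e\<in>B. f e) + real_of_int (\<Sum>e\<in>B. d e)" for B
    unfolding g_def by (simp add: sum.distrib)
  have cap: "e \<in> E \<Longrightarrow> 0 \<le> g e \<and> g e \<le> real (u e)" for e
  proof -
    assume e: "e \<in> E"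
    have eA: "(e, True) \<in> plus_arcs E" "(e, False) \<in> plus_arcs E" using e unfolding plus_arcs_def by auto
    have "real_of_int (c (e, True) + c (se e, True)) \<le> real (u e) - f e"
      using budget[OF eA(1)] unfolding plus_se_def resid_def by simp
    moreover have "real_of_int (c (e, False) + c (se e, False)) \<le> f e"
      using budget[OF eA(2)] unfolding plus_se_def resid_def by simp
    moreover have "0 \<le> c (e, True)" "0 \<le> c (se e, True)" "0 \<le> c (e, False)" "0 \<le> c (se e, False)"
      using cnn by auto
    ultimately show ?thesis unfolding g_def d_def by simp
  qed
  have consg: "v \<in> V - {s, sv s} \<Longrightarrow>
      (\<Sum>e\<in>{e\<in>E. head e = v}. g e) = (\<Sum>e\<in>{e\<in>E. tail e = v}. g e)" for v
  proof -
    assume v: "v \<in> V - {s, sv s}"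
    have "(\<Sum>e\<in>{e\<in>E. head e = v}. f e) = (\<Sum>e\<in>{e\<in>E. tail e = v}. f e)"
      using fl(1) v unfolding is_flow_def by blast
    moreover have "(\<Sum>e\<in>{e\<in>E. tail e = v}. d e) = (\<Sum>e\<in>{e\<in>E. head e = v}. d e)"
      using dnet[of v] v unfolding delta_def by auto
    ultimately show ?thesis unfolding gsum by simp
  qed
  have IS: "is_IS_flow V E tail head sv se u s g"
    unfolding is_IS_flow_def is_flow_def
  proof (intro conjI ballI)
    fix e assume "e \<in> E" then show "0 \<le> g e" "g e \<le> real (u e)" using cap by auto
  next
    fix v assume "v \<in> V - {s, sv s}" then show "(\<Sum>e\<in>{e\<in>E. head e = v}. g e) = (\<Sum>e\<in>{e\<in>E. tail e = v}. g e)"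
      using consg by blast
  next
    fix e assume "e \<in> E" then show "g e \<in> \<int>" unfolding g_def using fl(2) by auto
  next
    fix e assume e: "e \<in> E"
    have "se (se e) = e" using G.saA[OF e] by auto
    then have "d (se e) = d e" unfolding d_def by simp
    then show "g (se e) = g e" unfolding g_def using fl(3) e by simp
  qed
  have "flow_value E tail head s g = flow_value E tail head s f + real_of_int (2 * delta s)"
    unfolding flow_value_def gsum dnet[OF sV, symmetric] by simp
  also have "\<dots> > flow_value E tail head s f" unfolding delta_def using ssne by simp
  finally show ?thesis using IS by blast
qed


theorem mainTheorem5:
  fixes V :: "'v set" and E :: "'e set" and tail head :: "'e \<Rightarrow> 'v"
    and sv :: "'v \<Rightarrow> 'v" and se :: "'e \<Rightarrow> 'e" and u :: "'e \<Rightarrow> nat" and s :: 'v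
    and f :: "'e \<Rightarrow> real"
  assumes "skew_sym_network V E tail head sv se u s"
    and "is_IS_flow V E tail head sv se u s f"
  shows "(\<forall>g. is_IS_flow V E tail head sv se u s g \<longrightarrow> flow_value E tail head s g \<le> flow_value E tail head s f)
     \<longleftrightarrow> \<not> (\<exists>p. is_regular_path
                  (split_arcs (plus_arcs E) (resid u f))
                  (split_tl (plus_tl tail head)) (split_hd (plus_hd tail head))
                  (split_se (plus_se se)) p s (sv s))"
proof
  assume mx: "\<forall>g. is_IS_flow V E tail head sv se u s g \<longrightarrow> flow_value E tail head s g \<le> flow_value E tail head s f"
  show "\<not> (\<exists>p. is_regular_path
                  (split_arcs (plus_arcs E) (resid u f))
                  (split_tl (plus_tl tail head)) (split_hd (plus_hd tail head))
                  (split_se (plus_se se)) p s (sv s))"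
  proof
    assume "\<exists>p. is_regular_path
                  (split_arcs (plus_arcs E) (resid u f))
                  (split_tl (plus_tl tail head)) (split_hd (plus_hd tail head))
                  (split_se (plus_se se)) p s (sv s)"
    then obtain p where "is_regular_path
                  (split_arcs (plus_arcs E) (resid u f))
                  (split_tl (plus_tl tail head)) (split_hd (plus_hd tail head))
                  (split_se (plus_se se)) p s (sv s)" by blast
    from easy[OF assms(1) assms(2) this] mx show False by force
  qed
next
  assume np: "\<not> (\<exists>p. is_regular_path
                  (split_arcs (plus_arcs E) (resid u f))
                  (split_tl (plus_tl tail head)) (split_hd (plus_hd tail head))
                  (split_se (plus_se se)) p s (sv s))"
  show "\<forall>g. is_IS_flow V E tail head sv se u s g \<longrightarrow> flow_value E tail head s g \<le> flow_value E tail head s f"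
  proof (intro allI impI)
    fix g assume g: "is_IS_flow V E tail head sv se u s g"
    show "flow_value E tail head s g \<le> flow_value E tail head s f"
    proof (rule ccontr)
      assume "\<not> ?thesis"
      then have "flow_value E tail head s g > flow_value E tail head s f" by simp
      from hard[OF assms(1) assms(2) g this] np show False by blast
    qed
  qed
qed

end
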